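(* Let $n\ge 3$ and let $C$ be a chain with vertices $1,\dots,n$ and positive weights $w_1,\dots,w_{n-1}$ (edge $\{i,i+1\}$ has weight $w_i$). Let $\lambda(C)=d^D(1,n)$, where $D$ is the real symmetric $n\times n$ matrix with $D_{i,i+1}=D_{i+1,i}=w_i^{-1}$ for $i=1,\dots,n-1$ and all other entries $0$. Let $f(b)=\sum_{i=1}^{n-1}w_ib_i$ for $b\in\mathbb{R}^{n-1}$ and define $$L_1(C)=\max\{f(b) : |b_i|^2+|b_{i+1}|^2\le 1\ \forall\,1\le i\le n-2\},\qquad L_2(C)=\max\Big\{f(b) : \sum_{i=1}^{n-1}|b_i|\le\frac n2\Big\},$$ $$R_1(C)=\max\{f(b) : |b_i|+|b_{i+1}|\le 1\ \forall\,1\le i\le n-2\},\qquad R_2(C)=\max\Big\{f(b) : |b_i|\le\frac{1}{2\cos\frac{\pi}{n+1}}\ \forall\,1\le i\le n-1\Big\}.$$ Then $$\max(R_1(C),R_2(C))\le\lambda(C)\le\min(L_1(C),L_2(C)),$$ and moreover $R_2(C)=\dfrac{\ell(C)}{2\cos\frac{\pi}{n+1}}$ and $L_2(C)=\dfrac n2\max_{1\le i\le n-1}w_i$, where $\ell(C)=\sum_{i=1}^{n-1}w_i$.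
   Context: For a self-adjoint $n\times n$ matrix $M$, $d^M(i,j)=\sup\{|a(i)-a(j)| : a\in\mathbb{C}^n,\ \|[M,\pi(a)]\|\le 1\}$, where $\pi(a)=\mathrm{diag}(a(1),\dots,a(n))$ and $\|\cdot\|$ is the operator norm. $\lambda(C)$ is called the noncommutative length of $C$ and $\ell(C)$ its geodesic length. *)

theory Defs
  imports "HOL-Analysis.Analysis"
begin

text \<open>n x n complex matrices are represented as functions nat => nat => complex,
  with indices ranging over {1..n}; vectors in C^n as nat => complex on {1..n}.\<close>

definition mat_mult :: "nat \<Rightarrow> (nat \<Rightarrow> nat \<Rightarrow> complex) \<Rightarrow> (nat \<Rightarrow> nat \<Rightarrow> complex) \<Rightarrow> nat \<Rightarrow> nat \<Rightarrow> complex" where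
  "mat_mult n A B = (\<lambda>i j. \<Sum>k=1..n. A i k * B k j)"

definition diag_mat :: "(nat \<Rightarrow> complex) \<Rightarrow> nat \<Rightarrow> nat \<Rightarrow> complex" where
  "diag_mat a = (\<lambda>i j. if i = j then a i else 0)"

definition commutator :: "nat \<Rightarrow> (nat \<Rightarrow> nat \<Rightarrow> complex) \<Rightarrow> (nat \<Rightarrow> nat \<Rightarrow> complex) \<Rightarrow> nat \<Rightarrow> nat \<Rightarrow> complex" where
  "commutator n A B = (\<lambda>i j. mat_mult n A B i j - mat_mult n B A i j)"

definition op_norm :: "nat \<Rightarrow> (nat \<Rightarrow> nat \<Rightarrow> complex) \<Rightarrow> real" where
  "op_norm n A = Sup {sqrt (\<Sum>i=1..n. (cmod (\<Sum>j=1..n. A i j * v j))\<^sup>2) | v.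
        (\<Sum>j=1..n. (cmod (v j))\<^sup>2) \<le> 1}"

definition dM :: "nat \<Rightarrow> (nat \<Rightarrow> nat \<Rightarrow> complex) \<Rightarrow> nat \<Rightarrow> nat \<Rightarrow> real" where
  "dM n M i j = Sup {cmod (a i - a j) | a. op_norm n (commutator n M (diag_mat a)) \<le> 1}"

definition chain_D :: "nat \<Rightarrow> (nat \<Rightarrow> real) \<Rightarrow> nat \<Rightarrow> nat \<Rightarrow> complex" where
  "chain_D n w = (\<lambda>i j.
     if 1 \<le> i \<and> i \<le> n - 1 \<and> j = i + 1 then complex_of_real (1 / w i)
     else if 1 \<le> j \<and> j \<le> n - 1 \<and> i = j + 1 then complex_of_real (1 / w j)
     else 0)"

definition nc_length :: "nat \<Rightarrow> (nat \<Rightarrow> real) \<Rightarrow> real" where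
  "nc_length n w = dM n (chain_D n w) 1 n"

definition geo_length :: "nat \<Rightarrow> (nat \<Rightarrow> real) \<Rightarrow> real" where
  "geo_length n w = (\<Sum>i=1..n-1. w i)"

definition fw :: "nat \<Rightarrow> (nat \<Rightarrow> real) \<Rightarrow> (nat \<Rightarrow> real) \<Rightarrow> real" where
  "fw n w b = (\<Sum>i=1..n-1. w i * b i)"

definition L1 :: "nat \<Rightarrow> (nat \<Rightarrow> real) \<Rightarrow> real" where
  "L1 n w = Sup {fw n w b | b. \<forall>i\<in>{1..n-2}. \<bar>b i\<bar>\<^sup>2 + \<bar>b (i+1)\<bar>\<^sup>2 \<le> 1}"

definition L2 :: "nat \<Rightarrow> (nat \<Rightarrow> real) \<Rightarrow> real" where
  "L2 n w = Sup {fw n w b | b. (\<Sum>i=1..n-1. \<bar>b i\<bar>) \<le> real n / 2}"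

definition R1 :: "nat \<Rightarrow> (nat \<Rightarrow> real) \<Rightarrow> real" where
  "R1 n w = Sup {fw n w b | b. \<forall>i\<in>{1..n-2}. \<bar>b i\<bar> + \<bar>b (i+1)\<bar> \<le> 1}"

definition R2 :: "nat \<Rightarrow> (nat \<Rightarrow> real) \<Rightarrow> real" where
  "R2 n w = Sup {fw n w b | b. \<forall>i\<in>{1..n-1}. \<bar>b i\<bar> \<le> 1 / (2 * cos (pi / (real n + 1)))}"

end

theory Submission
  imports Defs
begin


definition Ca :: "nat \<Rightarrow> (nat \<Rightarrow> real) \<Rightarrow> (nat \<Rightarrow> complex) \<Rightarrow> nat \<Rightarrow> complex" where
  "Ca n w a i = (if 1 \<le> i \<and> i \<le> n - 1 then (a (i+1) - a i) / complex_of_real (w i) else 0)"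

lemma comm_entry:
  assumes "i \<in> {1..n}" "j \<in> {1..n}"
  shows "commutator n M (diag_mat a) i j = M i j * (a j - a i)"
proof -
  have 1: "mat_mult n M (diag_mat a) i j = M i j * a j"
    unfolding mat_mult_def diag_mat_def using assms
    by (simp add: if_distrib[where f="\<lambda>x. M i _ * x"] cong: if_cong)
  have 2: "mat_mult n (diag_mat a) M i j = a i * M i j"
    unfolding mat_mult_def diag_mat_def using assms
    by (simp add: if_distrib[where f="\<lambda>x. x * M _ j"] cong: if_cong)
  show ?thesis unfolding commutator_def 1 2 by (simp add: algebra_simps)
qed

lemma entry_split:
  assumes "i \<in> {1..n}" "j \<in> {1..n}"
  shows "chain_D n w i j * (a j - a i) * v j =
     (if j = i + 1 then Ca n w a i * v j else 0) - (if j + 1 = i then Ca n w a j * v j else 0)"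
  using assms unfolding chain_D_def Ca_def
  by (auto simp: algebra_simps diff_divide_distrib add_divide_distrib)

lemma tv:
  assumes "1 \<le> i" "i \<le> n"
  shows "(\<Sum>j=1..n. commutator n (chain_D n w) (diag_mat a) i j * v j)
     = Ca n w a i * v (i+1) - Ca n w a (i-1) * v (i-1)"
proof -
  have "(\<Sum>j=1..n. commutator n (chain_D n w) (diag_mat a) i j * v j)
      = (\<Sum>j=1..n. (if j = i + 1 then Ca n w a i * v j else 0) - (if j + 1 = i then Ca n w a j * v j else 0))"
    using assms by (intro sum.cong refl) (simp add: comm_entry entry_split)
  also have "\<dots> = (\<Sum>j=1..n. (if j = i + 1 then Ca n w a i * v j else 0)) - (\<Sum>j=1..n. (if j + 1 = i then Ca n w a j * v j else 0))"
    by (simp add: sum_subtractf)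
  also have "(\<Sum>j=1..n. (if j = i + 1 then Ca n w a i * v j else 0)) = Ca n w a i * v (i+1)"
    using assms by (auto simp: sum.delta' Ca_def)
  also have "(\<Sum>j=1..n. (if j + 1 = i then Ca n w a j * v j else 0)) = (\<Sum>j=1..n. (if j = i - 1 then Ca n w a j * v j else 0))"
    using assms by (intro sum.cong refl) auto
  also have "\<dots> = Ca n w a (i-1) * v (i-1)"
    using assms by (auto simp: sum.delta' Ca_def)
  finally show ?thesis .
qed



lemma cs2:
  fixes al be p q X Y :: real
  assumes "al \<ge> 0" "be \<ge> 0" "al = 0 \<or> X > 0" "be = 0 \<or> Y > 0"
  shows "(al*p + be*q)\<^sup>2 \<le> (al*X + be*Y) * (al*p\<^sup>2/X + be*q\<^sup>2/Y)"
proof (cases "al = 0 \<or> be = 0")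
  case True
  then show ?thesis using assms by (auto simp: power2_eq_square field_simps)
next
  case False
  then have X: "X > 0" and Y: "Y > 0" and a: "al > 0" and b: "be > 0" using assms by auto
  have k: "X*q\<^sup>2/Y + Y*p\<^sup>2/X - 2*p*q = (X*q - Y*p)\<^sup>2/(X*Y)"
    using X Y by (simp add: field_simps power2_eq_square)
  have "(X*q - Y*p)\<^sup>2/(X*Y) \<ge> 0" using X Y by simp
  then have k2: "X*q\<^sup>2/Y + Y*p\<^sup>2/X \<ge> 2*p*q" using k by linarith
  have "(al*X + be*Y) * (al*p\<^sup>2/X + be*q\<^sup>2/Y) = al*al*p\<^sup>2 + be*be*q\<^sup>2 + al*be*(X*q\<^sup>2/Y + Y*p\<^sup>2/X)"
    using X Y by (simp add: field_simps power2_eq_square)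
  moreover have "al*be*(X*q\<^sup>2/Y + Y*p\<^sup>2/X) \<ge> al*be*(2*p*q)"
    using k2 a b by (intro mult_left_mono) auto
  ultimately show ?thesis by (simp add: power2_eq_square algebra_simps)
qed

lemma shift_sum:
  fixes g :: "nat \<Rightarrow> real"
  assumes "g 1 = g (n+1)"
  shows "(\<Sum>i=1..n. g (i+1)) = (\<Sum>i=1..n. g i)"
proof -
  have "(\<Sum>i=1..n. g (Suc i) - g i) = g (Suc n) - g 1"
    by (rule sum_Suc_diff) simp
  then show ?thesis using assms by (simp add: sum_subtractf)
qed

lemma schur:
  fixes C :: "nat \<Rightarrow> complex" and x :: "nat \<Rightarrow> real" and v :: "nat \<Rightarrow> complex"
  assumes C0: "C 0 = 0" and Cn: "C n = 0" and xpos: "\<And>i. 1 \<le> i \<Longrightarrow> i \<le> n \<Longrightarrow> x i > 0"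
    and cond: "\<And>i. 1 \<le> i \<Longrightarrow> i \<le> n \<Longrightarrow> cmod (C i) * x (i+1) + cmod (C (i-1)) * x (i-1) \<le> mu * x i"
    and mu: "mu \<ge> 0"
  shows "(\<Sum>i=1..n. (cmod (C i * v (i+1) - C (i-1) * v (i-1)))\<^sup>2) \<le> mu\<^sup>2 * (\<Sum>i=1..n. (cmod (v i))\<^sup>2)"
proof -
  define e where "e i = cmod (C i)" for i
  define u where "u i = cmod (v i)" for i
  define g where "g j = x (j-1) * e (j-1) * (u j)\<^sup>2 / x j" for j
  define h where "h j = x (j+1) * e j * (u j)\<^sup>2 / x j" for j
  have e0: "e 0 = 0" and en: "e n = 0" using C0 Cn by (auto simp: e_def)
  have step: "(cmod (C i * v (i+1) - C (i-1) * v (i-1)))\<^sup>2 \<le> mu * (g (i+1) + h (i-1))"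
    if i: "1 \<le> i" "i \<le> n" for i
  proof -
    have t: "cmod (C i * v (i+1) - C (i-1) * v (i-1)) \<le> e i * u (i+1) + e (i-1) * u (i-1)"
      unfolding e_def u_def by (metis norm_mult norm_triangle_ineq4)
    have c1: "e i = 0 \<or> x (i+1) > 0"
      using xpos[of "i+1"] en i by (cases "i = n") auto
    have c2: "e (i-1) = 0 \<or> x (i-1) > 0"
      using xpos[of "i-1"] e0 i by (cases "i = 1") auto
    have f1: "e i * (u (i+1))\<^sup>2 / x (i+1) \<ge> 0" using c1 by (auto simp: e_def)
    have f2: "e (i-1) * (u (i-1))\<^sup>2 / x (i-1) \<ge> 0" using c2 by (auto simp: e_def)
    have "(cmod (C i * v (i+1) - C (i-1) * v (i-1)))\<^sup>2 \<le> (e i * u (i+1) + e (i-1) * u (i-1))\<^sup>2"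
      using t by (intro power_mono) auto
    also have "\<dots> \<le> (e i * x (i+1) + e (i-1) * x (i-1)) * (e i * (u (i+1))\<^sup>2 / x (i+1) + e (i-1) * (u (i-1))\<^sup>2 / x (i-1))"
      using cs2[of "e i" "e (i-1)" "x (i+1)" "x (i-1)" "u (i+1)" "u (i-1)"] c1 c2
      by (auto simp: e_def)
    also have "\<dots> \<le> (mu * x i) * (e i * (u (i+1))\<^sup>2 / x (i+1) + e (i-1) * (u (i-1))\<^sup>2 / x (i-1))"
      using cond[OF i] f1 f2 by (intro mult_right_mono) (auto simp: e_def)
    also have "\<dots> = mu * (g (i+1) + h (i-1))"
      using i by (simp add: g_def h_def algebra_simps)
    finally show ?thesis .
  qed
  have "(\<Sum>i=1..n. (cmod (C i * v (i+1) - C (i-1) * v (i-1)))\<^sup>2) \<le> (\<Sum>i=1..n. mu * (g (i+1) + h (i-1)))"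
    using step by (intro sum_mono) auto
  also have "\<dots> = mu * ((\<Sum>i=1..n. g (i+1)) + (\<Sum>i=1..n. h (i-1)))"
    by (simp add: sum_distrib_left[symmetric] sum.distrib)
  also have "(\<Sum>i=1..n. g (i+1)) = (\<Sum>i=1..n. g i)"
    by (rule shift_sum) (simp add: g_def e0 en)
  also have "(\<Sum>i=1..n. h (i-1)) = (\<Sum>i=1..n. h i)"
    using shift_sum[of "\<lambda>i. h (i-1)" n] by (simp add: h_def e0 en)
  also have "(\<Sum>i=1..n. g i) + (\<Sum>i=1..n. h i) \<le> (\<Sum>i=1..n. mu * (u i)\<^sup>2)"
  proof -
    have "g i + h i \<le> mu * (u i)\<^sup>2" if i: "1 \<le> i" "i \<le> n" for i
    proof -
      have xi: "x i > 0" using xpos i by auto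
      have "g i + h i = (u i)\<^sup>2 / x i * (e i * x (i+1) + e (i-1) * x (i-1))"
        using xi by (simp add: g_def h_def field_simps)
      also have "\<dots> \<le> (u i)\<^sup>2 / x i * (mu * x i)"
        using cond[OF i] xi by (intro mult_left_mono) (auto simp: e_def)
      also have "\<dots> = mu * (u i)\<^sup>2" using xi by simp
      finally show ?thesis .
    qed
    then have "(\<Sum>i=1..n. g i + h i) \<le> (\<Sum>i=1..n. mu * (u i)\<^sup>2)" by (intro sum_mono) auto
    then show ?thesis by (simp add: sum.distrib)
  qed
  finally show ?thesis
    using mu by (simp add: sum_distrib_left[symmetric] u_def power2_eq_square mult_left_mono mult.assoc)
qed



lemma opn:
  fixes A :: "nat \<Rightarrow> nat \<Rightarrow> complex"
  assumes bnd: "\<And>v. (\<Sum>i=1..n. (cmod (\<Sum>j=1..n. A i j * v j))\<^sup>2) \<le> mu\<^sup>2 * (\<Sum>j=1..n. (cmod (v j))\<^sup>2)"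
    and mu: "mu \<ge> 0"
  shows "op_norm n A \<le> mu" "op_norm n A \<ge> 0"
    "(\<Sum>i=1..n. (cmod (\<Sum>j=1..n. A i j * v j))\<^sup>2) \<le> (op_norm n A)\<^sup>2 * (\<Sum>j=1..n. (cmod (v j))\<^sup>2)"
proof -
  define S where "S = {sqrt (\<Sum>i=1..n. (cmod (\<Sum>j=1..n. A i j * v j))\<^sup>2) | v.
        (\<Sum>j=1..n. (cmod (v j))\<^sup>2) \<le> 1}"
  have opS: "op_norm n A = Sup S" unfolding op_norm_def S_def ..
  have le: "y \<le> mu" if "y \<in> S" for y
  proof -
    obtain v where y: "y = sqrt (\<Sum>i=1..n. (cmod (\<Sum>j=1..n. A i j * v j))\<^sup>2)"
      and v: "(\<Sum>j=1..n. (cmod (v j))\<^sup>2) \<le> 1" using \<open>y \<in> S\<close> unfolding S_def by blast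
    have "(\<Sum>i=1..n. (cmod (\<Sum>j=1..n. A i j * v j))\<^sup>2) \<le> mu\<^sup>2 * 1"
      using bnd[of v] v by (meson mult_left_mono order_trans zero_le_power2)
    then have "y \<le> sqrt (mu\<^sup>2)" unfolding y by (intro real_sqrt_le_mono) simp
    then show ?thesis using mu by simp
  qed
  have z: "0 \<in> S" unfolding S_def by (rule CollectI, rule exI[of _ "\<lambda>_. 0"]) simp
  have bdd: "bdd_above S" using le by (rule bdd_aboveI)
  show "op_norm n A \<le> mu" unfolding opS using z le by (intro cSup_least) auto
  show nn: "op_norm n A \<ge> 0" unfolding opS using cSup_upper[OF z bdd] by simp
  show "(\<Sum>i=1..n. (cmod (\<Sum>j=1..n. A i j * v j))\<^sup>2) \<le> (op_norm n A)\<^sup>2 * (\<Sum>j=1..n. (cmod (v j))\<^sup>2)"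
  proof (cases "(\<Sum>j=1..n. (cmod (v j))\<^sup>2) = 0")
    case True
    then show ?thesis using bnd[of v] by simp
  next
    case False
    define N where "N = (\<Sum>j=1..n. (cmod (v j))\<^sup>2)"
    have Npos: "N > 0" using False unfolding N_def by (metis less_eq_real_def sum_nonneg zero_le_power2)
    define v' where "v' j = v j / complex_of_real (sqrt N)" for j
    have n1: "(\<Sum>j=1..n. (cmod (v' j))\<^sup>2) = 1"
      using Npos by (simp add: v'_def norm_divide power_divide sum_divide_distrib[symmetric] N_def)
    have ev: "(\<Sum>i=1..n. (cmod (\<Sum>j=1..n. A i j * v' j))\<^sup>2) = (\<Sum>i=1..n. (cmod (\<Sum>j=1..n. A i j * v j))\<^sup>2) / N"
    proof -
      have "(cmod (\<Sum>j=1..n. A i j * v' j))\<^sup>2 = (cmod (\<Sum>j=1..n. A i j * v j))\<^sup>2 / N" for i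
      proof -
        have "(\<Sum>j=1..n. A i j * v' j) = (\<Sum>j=1..n. A i j * v j) / complex_of_real (sqrt N)"
          by (simp add: v'_def sum_divide_distrib)
        then show ?thesis using Npos by (simp add: norm_divide power_divide)
      qed
      then show ?thesis by (simp add: sum_divide_distrib)
    qed
    have "sqrt (\<Sum>i=1..n. (cmod (\<Sum>j=1..n. A i j * v' j))\<^sup>2) \<in> S"
      unfolding S_def using n1 by auto
    then have "sqrt (\<Sum>i=1..n. (cmod (\<Sum>j=1..n. A i j * v' j))\<^sup>2) \<le> op_norm n A"
      unfolding opS using bdd by (simp add: cSup_upper)
    then have "(\<Sum>i=1..n. (cmod (\<Sum>j=1..n. A i j * v' j))\<^sup>2) \<le> (op_norm n A)\<^sup>2"
    proof -
      assume h: "sqrt (\<Sum>i=1..n. (cmod (\<Sum>j=1..n. A i j * v' j))\<^sup>2) \<le> op_norm n A"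
      have "(sqrt (\<Sum>i=1..n. (cmod (\<Sum>j=1..n. A i j * v' j))\<^sup>2))\<^sup>2 \<le> (op_norm n A)\<^sup>2"
        using h by (intro power_mono) (auto intro: sum_nonneg)
      moreover have "(\<Sum>i=1..n. (cmod (\<Sum>j=1..n. A i j * v' j))\<^sup>2) \<ge> 0" by (intro sum_nonneg) auto
      ultimately show ?thesis by simp
    qed
    then have "(\<Sum>i=1..n. (cmod (\<Sum>j=1..n. A i j * v j))\<^sup>2) / N \<le> (op_norm n A)\<^sup>2" using ev by simp
    then show ?thesis using Npos unfolding N_def[symmetric] by (simp add: pos_divide_le_eq mult.commute)
  qed
qed



definition Tm :: "nat \<Rightarrow> (nat \<Rightarrow> real) \<Rightarrow> (nat \<Rightarrow> complex) \<Rightarrow> nat \<Rightarrow> nat \<Rightarrow> complex" where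
  "Tm n w a = commutator n (chain_D n w) (diag_mat a)"

lemma Ca0: "Ca n w a 0 = 0" and Can: "Ca n w a n = 0"
  by (auto simp: Ca_def)

lemma Tv_sum: "(\<Sum>i=1..n. (cmod (\<Sum>j=1..n. Tm n w a i j * v j))\<^sup>2)
   = (\<Sum>i=1..n. (cmod (Ca n w a i * v (i+1) - Ca n w a (i-1) * v (i-1)))\<^sup>2)"
proof (intro sum.cong refl)
  fix i assume "i \<in> {1..n}"
  then show "(cmod (\<Sum>j=1..n. Tm n w a i j * v j))\<^sup>2 = (cmod (Ca n w a i * v (i+1) - Ca n w a (i-1) * v (i-1)))\<^sup>2"
    unfolding Tm_def using tv[of i n w a v] by simp
qed

lemma Tm_bound: "\<exists>mu\<ge>0. \<forall>v. (\<Sum>i=1..n. (cmod (\<Sum>j=1..n. Tm n w a i j * v j))\<^sup>2) \<le> mu\<^sup>2 * (\<Sum>j=1..n. (cmod (v j))\<^sup>2)"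
proof -
  define mu where "mu = 2 * (\<Sum>k=0..n. cmod (Ca n w a k))"
  have mu0: "mu \<ge> 0" unfolding mu_def by (auto intro: sum_nonneg)
  have "(\<Sum>i=1..n. (cmod (Ca n w a i * v (i+1) - Ca n w a (i-1) * v (i-1)))\<^sup>2) \<le> mu\<^sup>2 * (\<Sum>j=1..n. (cmod (v j))\<^sup>2)" for v
  proof (rule schur[of "Ca n w a" n "\<lambda>_. 1" mu v, OF Ca0 Can])
    fix i assume i: "1 \<le> i" "i \<le> n"
    have "cmod (Ca n w a i) \<le> (\<Sum>k=0..n. cmod (Ca n w a k))"
      using i by (intro member_le_sum) auto
    moreover have "cmod (Ca n w a (i-1)) \<le> (\<Sum>k=0..n. cmod (Ca n w a k))"
      using i by (intro member_le_sum) auto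
    ultimately show "cmod (Ca n w a i) * (\<lambda>_. 1::real) (i+1) + cmod (Ca n w a (i-1)) * (\<lambda>_. 1) (i-1) \<le> mu * (\<lambda>_. 1) i"
      unfolding mu_def by simp
  qed (use mu0 in auto)
  then show ?thesis using mu0 unfolding Tv_sum by blast
qed

lemma Tm_op:
  "(\<Sum>i=1..n. (cmod (Ca n w a i * v (i+1) - Ca n w a (i-1) * v (i-1)))\<^sup>2) \<le> (op_norm n (Tm n w a))\<^sup>2 * (\<Sum>j=1..n. (cmod (v j))\<^sup>2)"
  "op_norm n (Tm n w a) \<ge> 0"
proof -
  obtain mu where mu: "mu \<ge> 0" and b: "\<And>v. (\<Sum>i=1..n. (cmod (\<Sum>j=1..n. Tm n w a i j * v j))\<^sup>2) \<le> mu\<^sup>2 * (\<Sum>j=1..n. (cmod (v j))\<^sup>2)"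
    using Tm_bound by blast
  show "(\<Sum>i=1..n. (cmod (Ca n w a i * v (i+1) - Ca n w a (i-1) * v (i-1)))\<^sup>2) \<le> (op_norm n (Tm n w a))\<^sup>2 * (\<Sum>j=1..n. (cmod (v j))\<^sup>2)"
    using opn(3)[OF b mu, of v] by (simp only: Tv_sum)
  show "op_norm n (Tm n w a) \<ge> 0" by (rule opn(2)[OF b mu])
qed

lemma UB_pair:
  assumes op: "op_norm n (Tm n w a) \<le> 1" and i: "1 \<le> i" "i \<le> n - 2"
  shows "(cmod (Ca n w a i))\<^sup>2 + (cmod (Ca n w a (i+1)))\<^sup>2 \<le> 1"
proof -
  define v :: "nat \<Rightarrow> complex" where "v j = (if j = i+1 then 1 else 0)" for j
  let ?C = "Ca n w a"
  have tm: "(cmod (?C k * v (k+1) - ?C (k-1) * v (k-1)))\<^sup>2 =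
     (if k = i then (cmod (?C i))\<^sup>2 else 0) + (if k = i+2 then (cmod (?C (i+1)))\<^sup>2 else 0)"
    if "1 \<le> k" for k
    using that by (auto simp: v_def)
  have "(\<Sum>k=1..n. (cmod (?C k * v (k+1) - ?C (k-1) * v (k-1)))\<^sup>2)
     = (\<Sum>k=1..n. (if k = i then (cmod (?C i))\<^sup>2 else 0) + (if k = i+2 then (cmod (?C (i+1)))\<^sup>2 else 0))"
    using tm by (intro sum.cong refl) auto
  also have "\<dots> = (cmod (?C i))\<^sup>2 + (cmod (?C (i+1)))\<^sup>2"
    using i by (simp add: sum.distrib sum.delta', arith)
  finally have L: "(\<Sum>k=1..n. (cmod (?C k * v (k+1) - ?C (k-1) * v (k-1)))\<^sup>2) = (cmod (?C i))\<^sup>2 + (cmod (?C (i+1)))\<^sup>2" .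
  have V: "(\<Sum>j=1..n. (cmod (v j))\<^sup>2) = 1"
    using i by (simp add: v_def if_distrib[where f="\<lambda>x. (cmod x)\<^sup>2"] sum.delta' cong: if_cong)
  have "(op_norm n (Tm n w a))\<^sup>2 \<le> 1"
    using op Tm_op(2)[of n w a] by (simp add: power_le_one)
  then show ?thesis using Tm_op(1)[of n w a v] L V by simp
qed

lemma UB_tel:
  assumes n: "n \<ge> 1" and w: "\<And>i. 1 \<le> i \<Longrightarrow> i \<le> n - 1 \<Longrightarrow> w i > 0"
  shows "cmod (a 1 - a n) \<le> fw n w (\<lambda>i. cmod (Ca n w a i))"
proof -
  have "a n - a 1 = (\<Sum>i=1..n-1. a (Suc i) - a i)"
    using sum_Suc_diff[of 1 "n-1" a] n by simp
  also have "\<dots> = (\<Sum>i=1..n-1. complex_of_real (w i) * Ca n w a i)"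
  proof (intro sum.cong refl)
    fix i assume "i \<in> {1..n-1}"
    then have "w i > 0" using w by auto
    then show "a (Suc i) - a i = complex_of_real (w i) * Ca n w a i"
      using \<open>i \<in> {1..n-1}\<close> by (auto simp: Ca_def)
  qed
  finally have "cmod (a 1 - a n) = cmod (\<Sum>i=1..n-1. complex_of_real (w i) * Ca n w a i)"
    by (simp add: norm_minus_commute)
  also have "\<dots> \<le> (\<Sum>i=1..n-1. cmod (complex_of_real (w i) * Ca n w a i))"
    by (rule norm_sum)
  also have "\<dots> = fw n w (\<lambda>i. cmod (Ca n w a i))"
    unfolding fw_def
  proof (intro sum.cong refl)
    fix i assume "i \<in> {1..n-1}"
    then have "w i > 0" using w by auto
    then show "cmod (complex_of_real (w i) * Ca n w a i) = w i * cmod (Ca n w a i)"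
      by (simp add: norm_mult)
  qed
  finally show ?thesis .
qed



lemma parity_sum:
  fixes g :: "nat \<Rightarrow> real"
  shows "(\<Sum>k=1..n. if odd k then g k + g (k-1) else 0) = (\<Sum>i=0..n. g i) - (if even n then g n else 0)"
  by (induction n) auto

lemma UB_l1sum:
  assumes op: "op_norm n (Tm n w a) \<le> 1" and n: "n \<ge> 1"
  shows "(\<Sum>i=1..n-1. cmod (Ca n w a i)) \<le> real n / 2"
proof -
  define C where "C = Ca n w a"
  define e where "e i = cmod (C i)" for i
  define s where "s i = (if C i = 0 then 1 else C i / complex_of_real (e i))" for i
  have s1: "cmod (s i) = 1" for i
    by (simp add: s_def e_def norm_divide)
  have sn0: "s i \<noteq> 0" for i using s1[of i] by auto
  have hs: "C i = complex_of_real (e i) * s i" for i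
    by (simp add: s_def e_def)
  define P where "P t = (\<Prod>r=1..t. - s (2*r-2) / s (2*r-1))" for t
  have PSuc: "P (Suc t) = P t * (- s (2*t) / s (2*t+1))" for t
    by (simp add: P_def)
  have Pn: "cmod (P t) = 1" for t
    by (simp add: P_def prod_norm[symmetric] norm_divide s1)
  define v where "v j = (if even j then P (j div 2) else 0)" for j
  have tm: "(cmod (C k * v (k+1) - C (k-1) * v (k-1)))\<^sup>2 = (if odd k then (e k + e (k-1))\<^sup>2 else 0)"
    if k: "1 \<le> k" for k
  proof (cases "odd k")
    case False
    then have "odd (k+1)" "odd (k-1)" using k by auto
    then show ?thesis using False by (simp add: v_def)
  next
    case True
    then obtain t where t: "k = 2*t+1" by (metis oddE)
    have v1: "v (k+1) = P t * (- s (2*t) / s k)"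
      using t by (simp add: v_def PSuc)
    have v2: "v (k-1) = P t" using t by (simp add: v_def)
    have "C k * v (k+1) - C (k-1) * v (k-1) = complex_of_real (e k) * s k * (P t * (- s (2*t) / s k)) - complex_of_real (e (2*t)) * s (2*t) * P t"
      using t v1 v2 hs[of k] hs[of "2*t"] by simp
    also have "\<dots> = - (complex_of_real (e k + e (2*t)) * (s (2*t) * P t))"
      using sn0[of k] by (simp add: field_simps)
    also have "cmod (- (complex_of_real (e k + e (2*t)) * (s (2*t) * P t))) = \<bar>e k + e (2*t)\<bar>"
      by (simp only: norm_minus_cancel norm_mult norm_of_real s1 Pn mult_1_right)
    also have "\<dots> = e k + e (2*t)" by (simp add: e_def)
    finally have "cmod (C k * v (k+1) - C (k-1) * v (k-1)) = (e k + e (2*t))" .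
    then show ?thesis using True t by simp
  qed
  define O1 where "O1 = (\<Sum>k=1..n. if odd k then (1::real) else 0)"
  define E1 where "E1 = (\<Sum>k=1..n. if even k then (1::real) else 0)"
  define S where "S = (\<Sum>k=1..n. if odd k then e k + e (k-1) else 0)"
  define Q where "Q = (\<Sum>k=1..n. if odd k then (e k + e (k-1))\<^sup>2 else 0)"
  have "Q = (\<Sum>k=1..n. (cmod (C k * v (k+1) - C (k-1) * v (k-1)))\<^sup>2)"
    unfolding Q_def using tm by (intro sum.cong refl) auto
  also have "\<dots> \<le> (op_norm n (Tm n w a))\<^sup>2 * (\<Sum>j=1..n. (cmod (v j))\<^sup>2)"
    unfolding C_def by (rule Tm_op(1))
  also have "(\<Sum>j=1..n. (cmod (v j))\<^sup>2) = E1"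
    unfolding E1_def by (intro sum.cong refl) (simp add: v_def Pn)
  finally have QE: "Q \<le> (op_norm n (Tm n w a))\<^sup>2 * E1" .
  have E10: "E1 \<ge> 0" unfolding E1_def by (intro sum_nonneg) auto
  have O10: "O1 \<ge> 0" unfolding O1_def by (intro sum_nonneg) auto
  have "(op_norm n (Tm n w a))\<^sup>2 \<le> 1"
    using op Tm_op(2)[of n w a] by (simp add: power_le_one)
  then have QE1: "Q \<le> E1" using QE E10 mult_right_mono[of "(op_norm n (Tm n w a))\<^sup>2" 1 E1] by simp
  have CS: "S\<^sup>2 \<le> O1 * Q"
  proof -
    have "(\<Sum>k=1..n. (if odd k then (1::real) else 0) * (if odd k then e k + e (k-1) else 0))\<^sup>2
       \<le> (\<Sum>k=1..n. (if odd k then (1::real) else 0)\<^sup>2) * (\<Sum>k=1..n. (if odd k then e k + e (k-1) else 0)\<^sup>2)"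
      by (rule Cauchy_Schwarz_ineq_sum)
    moreover have "(\<Sum>k=1..n. (if odd k then (1::real) else 0) * (if odd k then e k + e (k-1) else 0)) = S"
      unfolding S_def by (intro sum.cong refl) auto
    moreover have "(\<Sum>k=1..n. (if odd k then (1::real) else 0)\<^sup>2) = O1"
      unfolding O1_def by (intro sum.cong refl) auto
    moreover have "(\<Sum>k=1..n. (if odd k then e k + e (k-1) else 0)\<^sup>2) = Q"
      unfolding Q_def by (intro sum.cong refl) auto
    ultimately show ?thesis by simp
  qed
  have OE: "O1 + E1 = real n"
  proof -
    have "O1 + E1 = (\<Sum>k=1..n. (1::real))"
      unfolding O1_def E1_def sum.distrib[symmetric] by (intro sum.cong refl) auto
    then show ?thesis by simp
  qed
  have "S\<^sup>2 \<le> O1 * E1" using CS QE1 O10 by (meson mult_left_mono order_trans)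
  also have "\<dots> \<le> (real n / 2)\<^sup>2"
  proof -
    have "0 \<le> (O1 - E1)\<^sup>2" by simp
    moreover have "((O1 + E1) / 2)\<^sup>2 - O1 * E1 = (O1 - E1)\<^sup>2 / 4"
      by (simp add: power2_eq_square field_simps)
    ultimately show ?thesis unfolding OE[symmetric] by linarith
  qed
  finally have S2: "S\<^sup>2 \<le> (real n / 2)\<^sup>2" .
  have e0: "e 0 = 0" and en: "e n = 0" by (auto simp: e_def C_def Ca0 Can)
  have "S = (\<Sum>i=0..n. e i)" unfolding S_def parity_sum using en by simp
  also have "\<dots> = (\<Sum>i=1..n-1. e i)"
  proof -
    obtain m where m: "n = Suc m" using n by (cases n) auto
    have "(\<Sum>i=0..n. e i) = e 0 + (\<Sum>i=1..n. e i)" by (simp add: sum.atLeast_Suc_atMost)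
    also have "(\<Sum>i=1..n. e i) = (\<Sum>i=1..m. e i) + e n" using m by simp
    finally show ?thesis using e0 en m by simp
  qed
  finally have SS: "S = (\<Sum>i=1..n-1. cmod (Ca n w a i))" by (simp add: e_def C_def)
  have "S \<le> real n / 2" using S2 by (rule power2_le_imp_le) simp
  then show ?thesis using SS by simp
qed



definition Cb :: "nat \<Rightarrow> (nat \<Rightarrow> real) \<Rightarrow> nat \<Rightarrow> complex" where
  "Cb n b i = (if 1 \<le> i \<and> i \<le> n - 1 then complex_of_real (b i) else 0)"

lemma LB_constr:
  assumes n: "n \<ge> 1" and w: "\<And>i. 1 \<le> i \<Longrightarrow> i \<le> n - 1 \<Longrightarrow> w i > 0"
    and xpos: "\<And>i. 1 \<le> i \<Longrightarrow> i \<le> n \<Longrightarrow> x i > 0"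
    and cond: "\<And>i. 1 \<le> i \<Longrightarrow> i \<le> n \<Longrightarrow> cmod (Cb n b i) * x (i+1) + cmod (Cb n b (i-1)) * x (i-1) \<le> x i"
  shows "\<exists>a. op_norm n (Tm n w a) \<le> 1 \<and> fw n w b \<le> cmod (a 1 - a n)"
proof -
  define a where "a k = complex_of_real (\<Sum>i\<in>{1..<k}. w i * b i)" for k
  have CC: "Ca n w a = Cb n b"
  proof
    fix i
    show "Ca n w a i = Cb n b i"
    proof (cases "1 \<le> i \<and> i \<le> n - 1")
      case True
      then have wi: "w i > 0" using w by auto
      have "a (i+1) - a i = complex_of_real (w i * b i)"
        using True by (simp add: a_def of_real_diff[symmetric] del: of_real_diff)
      then show ?thesis using True wi by (simp add: Ca_def Cb_def)
    qed (auto simp: Ca_def Cb_def)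
  qed
  have "op_norm n (Tm n w a) \<le> 1"
  proof (rule opn(1))
    fix v :: "nat \<Rightarrow> complex"
    have "(\<Sum>i=1..n. (cmod (Cb n b i * v (i+1) - Cb n b (i-1) * v (i-1)))\<^sup>2) \<le> 1\<^sup>2 * (\<Sum>i=1..n. (cmod (v i))\<^sup>2)"
      by (rule schur[of "Cb n b" n x 1 v]) (use xpos cond in \<open>auto simp: Cb_def\<close>)
    then show "(\<Sum>i=1..n. (cmod (\<Sum>j=1..n. Tm n w a i j * v j))\<^sup>2) \<le> 1\<^sup>2 * (\<Sum>j=1..n. (cmod (v j))\<^sup>2)"
      unfolding Tv_sum CC .
  qed simp
  moreover have "fw n w b \<le> cmod (a 1 - a n)"
  proof -
    have "{1..<n} = {1..n-1}" using n by auto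
    then have "a n = complex_of_real (fw n w b)" by (simp add: a_def fw_def)
    moreover have "a 1 = 0" by (simp add: a_def)
    ultimately show ?thesis by simp
  qed
  ultimately show ?thesis by blast
qed



lemma sin_rec:
  fixes th :: real and i :: nat
  assumes "i \<ge> 1"
  shows "sin ((real i + 1) * th) + sin (real (i - 1) * th) = 2 * cos th * sin (real i * th)"
proof -
  have "real (i-1) = real i - 1" using assms by simp
  then show ?thesis by (simp add: algebra_simps sin_add sin_diff)
qed

theorem mainTheorem4:
  fixes n :: nat and w :: "nat \<Rightarrow> real"
  assumes "n \<ge> 3"
    and "\<And>i. 1 \<le> i \<Longrightarrow> i \<le> n - 1 \<Longrightarrow> w i > 0"
  shows "max (R1 n w) (R2 n w) \<le> nc_length n w
       \<and> nc_length n w \<le> min (L1 n w) (L2 n w)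
       \<and> R2 n w = geo_length n w / (2 * cos (pi / (real n + 1)))
       \<and> L2 n w = real n / 2 * Max (w ` {1..n-1})"
proof -
  note n = assms(1) and w = assms(2)
  define S where "S = {cmod (a 1 - a n) | a. op_norm n (Tm n w a) \<le> 1}"
  have lam: "nc_length n w = Sup S"
    unfolding nc_length_def dM_def S_def Tm_def ..
  define M where "M = Max (w ` {1..n-1})"
  obtain i0 where i0: "i0 \<in> {1..n-1}" "w i0 = M"
    using Max_in[of "w ` {1..n-1}"] n unfolding M_def by fastforce
  have Mge: "w i \<le> M" if "i \<in> {1..n-1}" for i
    unfolding M_def using that by (intro Max_ge) auto
  have Mpos: "M > 0" using i0 w by auto
  define th where "th = pi / (real n + 1)"
  define be where "be = 1 / (2 * cos th)"
  have th0: "0 < th" "th < pi / 2" using n by (auto simp: th_def field_simps)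
  have costh: "cos th > 0" using th0 by (intro cos_gt_zero_pi) auto
  have be0: "be > 0" using costh by (simp add: be_def)
  have fw_abs: "fw n w b \<le> (\<Sum>i=1..n-1. w i * \<bar>b i\<bar>)" for b
    unfolding fw_def using w by (intro sum_mono) (auto intro!: mult_left_mono)
  have elem: "cmod (a 1 - a n) \<le> fw n w (\<lambda>i. cmod (Ca n w a i))"
    "fw n w (\<lambda>i. cmod (Ca n w a i)) \<le> real n / 2 * M"
    if op: "op_norm n (Tm n w a) \<le> 1" for a
  proof -
    show "cmod (a 1 - a n) \<le> fw n w (\<lambda>i. cmod (Ca n w a i))"
      using UB_tel[of n w a] n w by simp
    have "fw n w (\<lambda>i. cmod (Ca n w a i)) \<le> (\<Sum>i=1..n-1. M * cmod (Ca n w a i))"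
      unfolding fw_def using Mge by (intro sum_mono mult_right_mono) auto
    also have "\<dots> = M * (\<Sum>i=1..n-1. cmod (Ca n w a i))" by (simp add: sum_distrib_left)
    also have "\<dots> \<le> M * (real n / 2)"
      using UB_l1sum[OF op] n Mpos by (intro mult_left_mono) auto
    finally show "fw n w (\<lambda>i. cmod (Ca n w a i)) \<le> real n / 2 * M" by (simp add: mult.commute)
  qed
  have bddS: "bdd_above S"
  proof (rule bdd_aboveI[of _ "real n / 2 * M"])
    fix y assume "y \<in> S"
    then obtain a where "y = cmod (a 1 - a n)" "op_norm n (Tm n w a) \<le> 1" unfolding S_def by blast
    then show "y \<le> real n / 2 * M" using elem[of a] by linarith
  qed
  have inS: "fw n w b \<le> Sup S"
    if xpos: "\<And>i. 1 \<le> i \<Longrightarrow> i \<le> n \<Longrightarrow> x i > 0"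
      and cond: "\<And>i. 1 \<le> i \<Longrightarrow> i \<le> n \<Longrightarrow> cmod (Cb n b i) * x (i+1) + cmod (Cb n b (i-1)) * x (i-1) \<le> x i"
    for b x
  proof -
    obtain a where a: "op_norm n (Tm n w a) \<le> 1" "fw n w b \<le> cmod (a 1 - a n)"
      using LB_constr[of n w x b] n w xpos cond by auto
    have "cmod (a 1 - a n) \<in> S" using a unfolding S_def by blast
    then show ?thesis using a cSup_upper[OF _ bddS] by force
  qed
  have Sne: "S \<noteq> {}"
  proof -
    have C0: "Cb n (\<lambda>_. 0) = (\<lambda>_. 0)" by (auto simp: Cb_def)
    obtain a where a: "op_norm n (Tm n w a) \<le> 1" "fw n w (\<lambda>_. 0) \<le> cmod (a 1 - a n)"
      using LB_constr[of n w "\<lambda>_. 1" "\<lambda>_. 0"] n w unfolding C0 by auto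
    then show ?thesis unfolding S_def by blast
  qed
  have L2v: "L2 n w = real n / 2 * M"
    unfolding L2_def
  proof (rule cSup_eq_maximum)
    let ?b = "\<lambda>i. if i = i0 then real n / 2 else 0"
    have "fw n w ?b = w i0 * (real n / 2)"
      unfolding fw_def using i0 by (simp add: if_distrib[where f="\<lambda>x. w _ * x"] sum.delta' cong: if_cong)
    moreover have "(\<Sum>i=1..n-1. \<bar>?b i\<bar>) \<le> real n / 2"
      using i0 by (simp add: if_distrib[where f="abs"] sum.delta' cong: if_cong)
    ultimately show "real n / 2 * M \<in> {fw n w b | b. (\<Sum>i=1..n-1. \<bar>b i\<bar>) \<le> real n / 2}"
      using i0 by (auto intro!: exI[of _ ?b])
  next
    fix y assume "y \<in> {fw n w b | b. (\<Sum>i=1..n-1. \<bar>b i\<bar>) \<le> real n / 2}"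
    then obtain b where y: "y = fw n w b" and b: "(\<Sum>i=1..n-1. \<bar>b i\<bar>) \<le> real n / 2" by blast
    have "y \<le> (\<Sum>i=1..n-1. w i * \<bar>b i\<bar>)" using fw_abs y by simp
    also have "\<dots> \<le> (\<Sum>i=1..n-1. M * \<bar>b i\<bar>)"
      using Mge by (intro sum_mono mult_right_mono) auto
    also have "\<dots> = M * (\<Sum>i=1..n-1. \<bar>b i\<bar>)" by (simp add: sum_distrib_left)
    also have "\<dots> \<le> M * (real n / 2)" using b Mpos by (intro mult_left_mono) auto
    finally show "y \<le> real n / 2 * M" by (simp add: mult.commute)
  qed
  have fe: "fw n w (\<lambda>_. be) = geo_length n w / (2 * cos (pi / (real n + 1)))"
  proof -
    have "fw n w (\<lambda>_. be) = (\<Sum>i=1..n-1. w i) * be"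
      by (simp add: fw_def sum_distrib_right)
    also have "\<dots> = geo_length n w / (2 * cos (pi / (real n + 1)))"
      by (simp add: geo_length_def be_def th_def)
    finally show ?thesis .
  qed
  have R2v: "R2 n w = geo_length n w / (2 * cos (pi / (real n + 1)))"
    unfolding R2_def
  proof (rule cSup_eq_maximum)
    have "\<forall>i\<in>{1..n-1}. \<bar>(\<lambda>_. be) i\<bar> \<le> 1 / (2 * cos (pi / (real n + 1)))"
      using be0 by (simp add: be_def th_def)
    then show "geo_length n w / (2 * cos (pi / (real n + 1))) \<in> {fw n w b | b. \<forall>i\<in>{1..n-1}. \<bar>b i\<bar> \<le> 1 / (2 * cos (pi / (real n + 1)))}"
      unfolding fe[symmetric] by blast
  next
    fix y assume "y \<in> {fw n w b | b. \<forall>i\<in>{1..n-1}. \<bar>b i\<bar> \<le> 1 / (2 * cos (pi / (real n + 1)))}"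
    then obtain b where y: "y = fw n w b" and b: "\<forall>i\<in>{1..n-1}. \<bar>b i\<bar> \<le> be"
      unfolding be_def th_def by blast
    have "y \<le> (\<Sum>i=1..n-1. w i * \<bar>b i\<bar>)" using fw_abs y by simp
    also have "\<dots> \<le> (\<Sum>i=1..n-1. w i * be)"
      using b w by (intro sum_mono mult_left_mono) (auto intro: less_imp_le)
    also have "\<dots> = (\<Sum>i=1..n-1. w i) * be"
      by (simp add: sum_distrib_right)
    also have "\<dots> = geo_length n w / (2 * cos (pi / (real n + 1)))"
      by (simp add: geo_length_def be_def th_def)
    finally show "y \<le> geo_length n w / (2 * cos (pi / (real n + 1)))" .
  qed
  have Cbabs: "cmod (Cb n b i) = (if 1 \<le> i \<and> i \<le> n - 1 then \<bar>b i\<bar> else 0)" for b i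
    by (simp add: Cb_def)
  have UL2: "Sup S \<le> L2 n w"
    unfolding L2v
  proof (rule cSup_least[OF Sne])
    fix y assume "y \<in> S"
    then obtain a where "y = cmod (a 1 - a n)" "op_norm n (Tm n w a) \<le> 1" unfolding S_def by blast
    then show "y \<le> real n / 2 * M" using elem[of a] by linarith
  qed
  define L1set where "L1set = {fw n w b | b. \<forall>i\<in>{1..n-2}. \<bar>b i\<bar>\<^sup>2 + \<bar>b (i+1)\<bar>\<^sup>2 \<le> 1}"
  have bddL1: "bdd_above L1set"
  proof (rule bdd_aboveI[of _ "\<Sum>i=1..n-1. w i"])
    fix y assume "y \<in> L1set"
    then obtain b where y: "y = fw n w b" and b: "\<forall>i\<in>{1..n-2}. \<bar>b i\<bar>\<^sup>2 + \<bar>b (i+1)\<bar>\<^sup>2 \<le> 1"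
      unfolding L1set_def by blast
    have bi: "\<bar>b i\<bar> \<le> 1" if i: "i \<in> {1..n-1}" for i
    proof -
      have "\<bar>b i\<bar>\<^sup>2 \<le> 1"
      proof (cases "i \<le> n - 2")
        case True
        then have "i \<in> {1..n-2}" using i by auto
        then have "\<bar>b i\<bar>\<^sup>2 + \<bar>b (i+1)\<bar>\<^sup>2 \<le> 1" using b by blast
        moreover have "\<bar>b (i+1)\<bar>\<^sup>2 \<ge> 0" by simp
        ultimately show ?thesis by linarith
      next
        case False
        then have "i = (n-2) + 1" using i n by auto
        moreover have "n - 2 \<in> {1..n-2}" using n by auto
        then have "\<bar>b (n-2)\<bar>\<^sup>2 + \<bar>b (n-2+1)\<bar>\<^sup>2 \<le> 1" using b by blast
        moreover have "\<bar>b (n-2)\<bar>\<^sup>2 \<ge> 0" by simp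
        moreover have "\<bar>b i\<bar>\<^sup>2 = \<bar>b (n-2+1)\<bar>\<^sup>2" using \<open>i = (n-2) + 1\<close> by (simp only:)
        ultimately show ?thesis by linarith
      qed
      then show ?thesis using power2_le_imp_le[of "\<bar>b i\<bar>" 1] by simp
    qed
    have "y \<le> (\<Sum>i=1..n-1. w i * \<bar>b i\<bar>)" using fw_abs y by simp
    also have "\<dots> \<le> (\<Sum>i=1..n-1. w i * 1)"
      using bi w by (intro sum_mono mult_left_mono) (auto intro: less_imp_le)
    finally show "y \<le> (\<Sum>i=1..n-1. w i)" by simp
  qed
  have UL1: "Sup S \<le> L1 n w"
  proof (rule cSup_least[OF Sne])
    fix y assume "y \<in> S"
    then obtain a where y: "y = cmod (a 1 - a n)" and op: "op_norm n (Tm n w a) \<le> 1" unfolding S_def by blast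
    have "fw n w (\<lambda>i. cmod (Ca n w a i)) \<in> L1set"
      unfolding L1set_def using UB_pair[OF op] by auto
    then have "fw n w (\<lambda>i. cmod (Ca n w a i)) \<le> L1 n w"
      unfolding L1_def L1set_def[symmetric] using bddL1 by (rule cSup_upper)
    then show "y \<le> L1 n w" using elem(1)[OF op] y by linarith
  qed
  have LR1: "R1 n w \<le> Sup S"
    unfolding R1_def
  proof (rule cSup_least)
    show "{fw n w b | b. \<forall>i\<in>{1..n-2}. \<bar>b i\<bar> + \<bar>b (i+1)\<bar> \<le> 1} \<noteq> {}" (is "?A \<noteq> {}")
    proof -
      have "fw n w (\<lambda>_. 0) \<in> ?A" by force
      then show ?thesis by blast
    qed
  next
    fix y assume "y \<in> {fw n w b | b. \<forall>i\<in>{1..n-2}. \<bar>b i\<bar> + \<bar>b (i+1)\<bar> \<le> 1}"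
    then obtain b where y: "y = fw n w b" and b: "\<forall>i\<in>{1..n-2}. \<bar>b i\<bar> + \<bar>b (i+1)\<bar> \<le> 1" by blast
    have "fw n w b \<le> Sup S"
    proof (rule inS[of "\<lambda>_. 1"])
      fix i assume i: "1 \<le> i" "i \<le> n"
      show "cmod (Cb n b i) * (\<lambda>_. 1::real) (i+1) + cmod (Cb n b (i-1)) * (\<lambda>_. 1) (i-1) \<le> (\<lambda>_. 1) i"
      proof (cases "i = 1")
        case True
        have "(1::nat) \<in> {1..n-2}" using n by auto
        then have "\<bar>b 1\<bar> + \<bar>b (1+1)\<bar> \<le> 1" using b by blast
        then show ?thesis using True n by (auto simp: Cbabs)
      next
        case F1: False
        show ?thesis
        proof (cases "i = n")
          case True
          have "n - 2 \<in> {1..n-2}" "n - 2 + 1 = n - 1" using n by auto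
          then have h: "\<bar>b (n-2)\<bar> + \<bar>b (n-1)\<bar> \<le> 1" using b by metis
          have "\<bar>b (n-1)\<bar> \<le> 1" using h abs_ge_zero[of "b (n-2)"] by linarith
          then show ?thesis using True n by (auto simp: Cbabs)
        next
          case False
          have "i - 1 \<in> {1..n-2}" "i - 1 + 1 = i" using i F1 False by auto
          then have h: "\<bar>b (i-1)\<bar> + \<bar>b i\<bar> \<le> 1" using b by metis
          then show ?thesis using i F1 False by (auto simp: Cbabs)
        qed
      qed
    qed auto
    then show "y \<le> Sup S" using y by simp
  qed
  have LR2: "R2 n w \<le> Sup S"
  proof -
    have "fw n w (\<lambda>_. be) \<le> Sup S"
    proof (rule inS[of "\<lambda>i. sin (real i * th)"])
      fix i assume i: "1 \<le> i" "i \<le> n"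
      have thn: "(real n + 1) * th = pi" by (simp add: th_def)
      have "real i * th < (real n + 1) * th" using i th0 by (intro mult_strict_right_mono) auto
      then have ith: "real i * th < pi" using thn by simp
      have "real (i+1) * th \<le> (real n + 1) * th" using i th0 by (intro mult_right_mono) auto
      then have ith1: "real (i+1) * th \<le> pi" using thn by simp
      show "sin (real i * th) > 0"
        using i th0 ith by (intro sin_gt_zero) auto
      have s1: "sin (real (i+1) * th) \<ge> 0"
        using i th0 ith1 by (intro sin_ge_zero) auto
      have s2: "sin (real (i-1) * th) \<ge> 0"
      proof (intro sin_ge_zero)
        have "real (i-1) * th \<le> real i * th" using th0 by (intro mult_right_mono) auto
        then show "real (i-1) * th \<le> pi" using ith by linarith
      qed (use th0 in auto)
      have c1: "cmod (Cb n (\<lambda>_. be) i) \<le> be" and c2: "cmod (Cb n (\<lambda>_. be) (i-1)) \<le> be"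
        using be0 by (auto simp: Cbabs)
      have "cmod (Cb n (\<lambda>_. be) i) * sin (real (i+1) * th) + cmod (Cb n (\<lambda>_. be) (i-1)) * sin (real (i-1) * th)
          \<le> be * sin (real (i+1) * th) + be * sin (real (i-1) * th)"
        using s1 s2 c1 c2 by (intro add_mono mult_right_mono) auto
      also have "\<dots> = be * (sin (real (i+1) * th) + sin (real (i-1) * th))"
        by (simp only: distrib_left)
      also have "\<dots> = be * (2 * cos th * sin (real i * th))"
        using sin_rec[of i th] i by (simp add: add.commute)
      also have "\<dots> = sin (real i * th)" using costh by (simp add: be_def)
      finally show "cmod (Cb n (\<lambda>_. be) i) * sin (real (i+1) * th) + cmod (Cb n (\<lambda>_. be) (i-1)) * sin (real (i-1) * th)
          \<le> sin (real i * th)" .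
    qed
    then show ?thesis using R2v fe by simp
  qed
  show ?thesis
    using LR1 LR2 UL1 UL2 R2v L2v unfolding lam M_def by simp
qed

end
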